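(* For all $1\le i,j,l\le m$: (1) $(D_jD_i\Omega,\bar\Omega)=0$; (2) $(D_jD_i\Omega,\overline{D_l\Omega})=0$; (3) $D_jD_i\Omega=D_iD_j\Omega$.
   Context: $\mathcal M$ is the moduli space of polarized Calabi–Yau $n$-folds ($n\ge3$), of complex dimension $m$, with local holomorphic coordinates $z_1,\dots,z_m$, $\partial_i=\partial/\partial z_i$. Locally the primitive middle cohomology of the fibres is identified with one fixed space $H$. $Q(\phi,\psi)=(-1)^{n(n-1)/2}\int\phi\wedge\psi$, $(\xi,\eta)=(\sqrt{-1})^nQ(\xi,\eta)$. $\Omega$ is a nonzero local holomorphic section of the Hodge bundle $F^n$. Weil–Petersson metric $g_{i\bar j}=-\partial_i\bar\partial_j\log(\Omega,\bar\Omega)$, inverse $g^{i\bar j}$, Christoffel symbols $\Gamma^k_{ij}=g^{k\bar q}\partial_jg_{i\bar q}$. $K_i=-\partial_i\log(\Omega,\bar\Omega)$, $D_i\Omega=\partial_i\Omega+K_i\Omega$, $D_jD_i\Omega=\partial_jD_i\Omega-\sum_k\Gamma^k_{ij}D_k\Omega+K_jD_i\Omega$. *)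

theory Defs
  imports "HOL-Analysis.Analysis"
begin

text \<open>Local holomorphic coordinates z = (z_1,...,z_m) are points of complex^'m
 (index type 'm, m = CARD('m)).  The fixed space H of primitive middle cohomology
 is modelled as complex^'k with its real structure given by componentwise conjugation.\<close>

definition wd :: "(complex^'m \<Rightarrow> complex) \<Rightarrow> 'm \<Rightarrow> complex^'m \<Rightarrow> complex" where
  "wd f i z = (frechet_derivative f (at z) (axis i 1)
               - \<i> * frechet_derivative f (at z) (axis i \<i>)) / 2"

definition wdbar :: "(complex^'m \<Rightarrow> complex) \<Rightarrow> 'm \<Rightarrow> complex^'m \<Rightarrow> complex" where
  "wdbar f i z = (frechet_derivative f (at z) (axis i 1)
               + \<i> * frechet_derivative f (at z) (axis i \<i>)) / 2"

definition vwd :: "(complex^'m \<Rightarrow> complex^'k) \<Rightarrow> 'm \<Rightarrow> complex^'m \<Rightarrow> complex^'k" where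
  "vwd F i z = (\<chi> a. wd (\<lambda>w. F w $ a) i z)"

definition vcnj :: "complex^'k \<Rightarrow> complex^'k" where
  "vcnj v = (\<chi> a. cnj (v $ a))"

definition holo_on :: "(complex^'m) set \<Rightarrow> (complex^'m \<Rightarrow> complex^'k) \<Rightarrow> bool" where
  "holo_on U F \<longleftrightarrow> (\<forall>a. \<forall>z\<in>U. \<exists>f'. ((\<lambda>w. F w $ a) has_derivative f') (at z)
                         \<and> (\<forall>v. f' (\<i> *s v) = \<i> * f' v))"

text \<open>The intersection pairing Q(phi,psi) = (-1)^(n(n-1)/2) int phi wedge psi, where the
 bilinear form int phi wedge psi on H is given by the matrix Qm.\<close>
definition Qform :: "nat \<Rightarrow> complex^'k^'k \<Rightarrow> complex^'k \<Rightarrow> complex^'k \<Rightarrow> complex" where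
  "Qform n Qm \<phi> \<psi> = (-1) ^ (n * (n - 1) div 2) * (\<Sum>a\<in>UNIV. \<Sum>b\<in>UNIV. \<phi> $ a * Qm $ a $ b * \<psi> $ b)"

definition pair :: "nat \<Rightarrow> complex^'k^'k \<Rightarrow> complex^'k \<Rightarrow> complex^'k \<Rightarrow> complex" where
  "pair n Qm \<xi> \<eta> = \<i> ^ n * Qform n Qm \<xi> \<eta>"

definition normsq :: "nat \<Rightarrow> complex^'k^'k \<Rightarrow> (complex^'m \<Rightarrow> complex^'k) \<Rightarrow> complex^'m \<Rightarrow> complex" where
  "normsq n Qm \<Omega> z = pair n Qm (\<Omega> z) (vcnj (\<Omega> z))"

definition wp :: "nat \<Rightarrow> complex^'k^'k \<Rightarrow> (complex^'m \<Rightarrow> complex^'k) \<Rightarrow> complex^'m \<Rightarrow> complex^'m^'m" where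
  "wp n Qm \<Omega> z = (\<chi> i j. - wd (\<lambda>w. wdbar (\<lambda>u. Ln (normsq n Qm \<Omega> u)) j w) i z)"

text \<open>Inverse metric g^{k qbar}, characterised by sum_q g^{k qbar} g_{p qbar} = delta_kp.\<close>
definition wpinv :: "nat \<Rightarrow> complex^'k^'k \<Rightarrow> (complex^'m \<Rightarrow> complex^'k) \<Rightarrow> complex^'m \<Rightarrow> complex^'m^'m" where
  "wpinv n Qm \<Omega> z = matrix_inv (transpose (wp n Qm \<Omega> z))"

definition Chr :: "nat \<Rightarrow> complex^'k^'k \<Rightarrow> (complex^'m \<Rightarrow> complex^'k) \<Rightarrow> 'm \<Rightarrow> 'm \<Rightarrow> 'm \<Rightarrow> complex^'m \<Rightarrow> complex" where
  "Chr n Qm \<Omega> k i j z = (\<Sum>q\<in>UNIV. wpinv n Qm \<Omega> z $ k $ q * wd (\<lambda>w. wp n Qm \<Omega> w $ i $ q) j z)"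

definition Kc :: "nat \<Rightarrow> complex^'k^'k \<Rightarrow> (complex^'m \<Rightarrow> complex^'k) \<Rightarrow> 'm \<Rightarrow> complex^'m \<Rightarrow> complex" where
  "Kc n Qm \<Omega> i z = - wd (\<lambda>w. Ln (normsq n Qm \<Omega> w)) i z"

definition D1 :: "nat \<Rightarrow> complex^'k^'k \<Rightarrow> (complex^'m \<Rightarrow> complex^'k) \<Rightarrow> 'm \<Rightarrow> complex^'m \<Rightarrow> complex^'k" where
  "D1 n Qm \<Omega> i z = vwd \<Omega> i z + Kc n Qm \<Omega> i z *s \<Omega> z"

definition D2 :: "nat \<Rightarrow> complex^'k^'k \<Rightarrow> (complex^'m \<Rightarrow> complex^'k) \<Rightarrow> 'm \<Rightarrow> 'm \<Rightarrow> complex^'m \<Rightarrow> complex^'k" where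
  "D2 n Qm \<Omega> j i z = vwd (D1 n Qm \<Omega> i) j z
      - (\<Sum>k\<in>UNIV. Chr n Qm \<Omega> k i j z *s D1 n Qm \<Omega> k z)
      + Kc n Qm \<Omega> j z *s D1 n Qm \<Omega> i z"

end

theory Submission
  imports Defs "HOL-Complex_Analysis.Cauchy_Integral_Formula"
begin

lemma wd_of: "(f has_derivative L) (at z) \<Longrightarrow> wd f i z = (L (axis i 1) - \<i> * L (axis i \<i>)) / 2"
  unfolding wd_def by (metis frechet_derivative_at)
lemma wdbar_of: "(f has_derivative L) (at z) \<Longrightarrow> wdbar f i z = (L (axis i 1) + \<i> * L (axis i \<i>)) / 2"
  unfolding wdbar_def by (metis frechet_derivative_at)

lemma dA: assumes "f differentiable (at z)" shows "(f has_derivative frechet_derivative f (at z)) (at z)"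
  using assms frechet_derivative_works by blast

lemma wd_add: assumes "f differentiable (at z)" "g differentiable (at z)" shows
  "wd (\<lambda>w. f w + g w) i z = wd f i z + wd g i z"
  "wdbar (\<lambda>w. f w + g w) i z = wdbar f i z + wdbar g i z"
proof -
  note h = has_derivative_add[OF dA[OF assms(1)] dA[OF assms(2)]]
  show "wd (\<lambda>w. f w + g w) i z = wd f i z + wd g i z"
    by (subst wd_of[OF h]) (simp add: wd_def field_simps)
  show "wdbar (\<lambda>w. f w + g w) i z = wdbar f i z + wdbar g i z"
    by (subst wdbar_of[OF h]) (simp add: wdbar_def field_simps)
qed

lemma wd_diff: assumes "f differentiable (at z)" "g differentiable (at z)" shows
  "wd (\<lambda>w. f w - g w) i z = wd f i z - wd g i z"
  "wdbar (\<lambda>w. f w - g w) i z = wdbar f i z - wdbar g i z"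
proof -
  note h = has_derivative_diff[OF dA[OF assms(1)] dA[OF assms(2)]]
  show "wd (\<lambda>w. f w - g w) i z = wd f i z - wd g i z"
    by (subst wd_of[OF h]) (simp add: wd_def field_simps)
  show "wdbar (\<lambda>w. f w - g w) i z = wdbar f i z - wdbar g i z"
    by (subst wdbar_of[OF h]) (simp add: wdbar_def field_simps)
qed

lemma wd_mult: assumes "f differentiable (at z)" "g differentiable (at z)" shows
  "wd (\<lambda>w. f w * g w) i z = f z * wd g i z + wd f i z * g z"
  "wdbar (\<lambda>w. f w * g w) i z = f z * wdbar g i z + wdbar f i z * g z"
proof -
  note h = has_derivative_mult[OF dA[OF assms(1)] dA[OF assms(2)]]
  show "wd (\<lambda>w. f w * g w) i z = f z * wd g i z + wd f i z * g z"
    by (subst wd_of[OF h]) (simp add: wd_def field_simps)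
  show "wdbar (\<lambda>w. f w * g w) i z = f z * wdbar g i z + wdbar f i z * g z"
    by (subst wdbar_of[OF h]) (simp add: wdbar_def field_simps)
qed

lemma wd_divide: assumes "f differentiable (at z)" "g differentiable (at z)" "g z \<noteq> 0" shows
  "wd (\<lambda>w. f w / g w) i z = (wd f i z * g z - f z * wd g i z) / (g z * g z)"
  "wdbar (\<lambda>w. f w / g w) i z = (wdbar f i z * g z - f z * wdbar g i z) / (g z * g z)"
proof -
  note h = has_derivative_divide'[OF dA[OF assms(1)] dA[OF assms(2)] assms(3)]
  show "wd (\<lambda>w. f w / g w) i z = (wd f i z * g z - f z * wd g i z) / (g z * g z)"
    using assms(3) by (subst wd_of[OF h]) (simp add: wd_def field_simps)
  show "wdbar (\<lambda>w. f w / g w) i z = (wdbar f i z * g z - f z * wdbar g i z) / (g z * g z)"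
    using assms(3) by (subst wdbar_of[OF h]) (simp add: wdbar_def field_simps)
qed

lemma wd_const: "wd (\<lambda>w. c) i z = 0" "wdbar (\<lambda>w. c) i z = 0"
  by (auto simp: wd_of[OF has_derivative_const] wdbar_of[OF has_derivative_const])

lemma wd_cnj: "f differentiable (at z) \<Longrightarrow> wd (\<lambda>w. cnj (f w)) i z = cnj (wdbar f i z)"
  "f differentiable (at z) \<Longrightarrow> wdbar (\<lambda>w. cnj (f w)) i z = cnj (wd f i z)"
proof -
  assume d: "f differentiable (at z)"
  note h = has_derivative_cnj[OF dA[OF d]]
  show "wd (\<lambda>w. cnj (f w)) i z = cnj (wdbar f i z)"
    by (subst wd_of[OF h]) (simp add: wdbar_def field_simps)
  show "wdbar (\<lambda>w. cnj (f w)) i z = cnj (wd f i z)"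
    by (subst wdbar_of[OF h]) (simp add: wd_def field_simps)
qed

lemma wd_sum: "finite S \<Longrightarrow> (\<And>a. a \<in> S \<Longrightarrow> f a differentiable (at z)) \<Longrightarrow>
  wd (\<lambda>w. \<Sum>a\<in>S. f a w) i z = (\<Sum>a\<in>S. wd (f a) i z)"
  "finite S \<Longrightarrow> (\<And>a. a \<in> S \<Longrightarrow> f a differentiable (at z)) \<Longrightarrow>
  wdbar (\<lambda>w. \<Sum>a\<in>S. f a w) i z = (\<Sum>a\<in>S. wdbar (f a) i z)"
proof -
  assume S: "finite S" and d: "\<And>a. a \<in> S \<Longrightarrow> f a differentiable (at z)"
  have h: "((\<lambda>w. \<Sum>a\<in>S. f a w) has_derivative (\<lambda>v. \<Sum>a\<in>S. frechet_derivative (f a) (at z) v)) (at z)"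
    by (rule has_derivative_sum) (use d dA in auto)
  show "wd (\<lambda>w. \<Sum>a\<in>S. f a w) i z = (\<Sum>a\<in>S. wd (f a) i z)"
    by (subst wd_of[OF h]) (simp add: wd_def sum_divide_distrib[symmetric] sum_subtractf sum_distrib_left)
  show "wdbar (\<lambda>w. \<Sum>a\<in>S. f a w) i z = (\<Sum>a\<in>S. wdbar (f a) i z)"
    by (subst wdbar_of[OF h]) (simp add: wdbar_def sum_divide_distrib[symmetric] sum.distrib sum_distrib_left)
qed

lemma wd_Ln: "f differentiable (at z) \<Longrightarrow> f z \<notin> \<real>\<^sub>\<le>\<^sub>0 \<Longrightarrow>
  wd (\<lambda>w. Ln (f w)) i z = wd f i z / f z"
  "f differentiable (at z) \<Longrightarrow> f z \<notin> \<real>\<^sub>\<le>\<^sub>0 \<Longrightarrow>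
  wdbar (\<lambda>w. Ln (f w)) i z = wdbar f i z / f z"
proof -
  assume d: "f differentiable (at z)" and nz: "f z \<notin> \<real>\<^sub>\<le>\<^sub>0"
  have h: "((\<lambda>w. Ln (f w)) has_derivative (\<lambda>v. inverse (f z) * frechet_derivative f (at z) v)) (at z)"
    using has_derivative_compose[OF dA[OF d] has_field_derivative_imp_has_derivative[OF has_field_derivative_Ln[OF nz]]]
    by (simp add: o_def)
  have nz0: "f z \<noteq> 0" using nz by auto
  show "wd (\<lambda>w. Ln (f w)) i z = wd f i z / f z"
    using nz0 by (subst wd_of[OF h]) (simp add: wd_def field_simps)
  show "wdbar (\<lambda>w. Ln (f w)) i z = wdbar f i z / f z"
    using nz0 by (subst wdbar_of[OF h]) (simp add: wdbar_def field_simps)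
qed

lemma wd_local: "g differentiable (at z) \<Longrightarrow> open S \<Longrightarrow> z \<in> S \<Longrightarrow> (\<And>w. w \<in> S \<Longrightarrow> f w = g w) \<Longrightarrow>
   wd f i z = wd g i z \<and> wdbar f i z = wdbar g i z \<and> f differentiable (at z)"
proof -
  assume d: "g differentiable (at z)" and S: "open S" "z \<in> S" and e: "\<And>w. w \<in> S \<Longrightarrow> f w = g w"
  have "(f has_derivative frechet_derivative g (at z)) (at z)"
    by (rule has_derivative_transform_within_open[OF dA[OF d] S]) (simp add: e)
  then show ?thesis using wd_of wdbar_of dA[OF d] by (metis differentiableI)
qed

definition hol :: "(complex^'m) set \<Rightarrow> (complex^'m \<Rightarrow> complex) \<Rightarrow> bool" where
  "hol U f \<longleftrightarrow> (\<forall>z\<in>U. \<exists>f'. (f has_derivative f') (at z) \<and> (\<forall>v. f' (\<i> *s v) = \<i> * f' v))"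

lemma norm_axis_c: "norm (axis i (c::complex) :: complex^'m) = cmod c"
proof -
  have "(\<Sum>j\<in>UNIV. (cmod (axis i c $ j))\<^sup>2) = (cmod c)\<^sup>2"
    by (simp add: axis_def if_distrib[of "\<lambda>x. (cmod x)\<^sup>2"] cong: if_cong)
  then show ?thesis by (simp add: norm_vec_def L2_set_def)
qed

lemma bl_axis: "bounded_linear (\<lambda>c::complex. axis i c :: complex^'m)"
  by (rule bounded_linear_intro[where K=1]) (simp_all only: norm_axis_c, simp_all add: axis_def vec_eq_iff)

lemma axis_sum: "(\<Sum>k\<in>UNIV. axis i h $ k * c k) = h * (c i :: complex)"
proof -
  have "axis i h $ k * c k = (if k = i then h * c k else 0)" for k by (simp add: axis_def)
  then show ?thesis by simp
qed

lemma clin_scale: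
  assumes "(f has_derivative L) F" "\<forall>v. L (\<i> *s v) = \<i> * L v"
  shows "L (c *s v) = c * L v"
proof -
  interpret bounded_linear L using assms(1) by (rule has_derivative_bounded_linear)
  have e: "c = of_real (Re c) + \<i> * of_real (Im c)" by (simp add: complex_eq_iff)
  have "c *s v = Re c *\<^sub>R v + Im c *\<^sub>R (\<i> *s v)"
    by (subst e) (simp add: vec_eq_iff, simp add: scaleR_conv_of_real algebra_simps)
  then have "L (c *s v) = Re c *\<^sub>R L v + Im c *\<^sub>R (\<i> * L v)" using assms(2) by (simp add: add scale)
  also have "\<dots> = c * L v" by (subst (3) e) (simp add: scaleR_conv_of_real algebra_simps)
  finally show ?thesis .
qed

lemma vec_expand: "(v::complex^'m) = (\<Sum>k\<in>UNIV. v $ k *s axis k 1)"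
  by (simp add: vec_eq_iff axis_def sum_component if_distrib cong: if_cong)

lemma clin_expand:
  assumes "(f has_derivative L) F" "\<forall>v. L (\<i> *s v) = \<i> * L v"
  shows "L v = (\<Sum>k\<in>UNIV. v $ k * L (axis k 1))"
proof -
  interpret bounded_linear L using assms(1) by (rule has_derivative_bounded_linear)
  have "L v = L (\<Sum>k\<in>UNIV. v $ k *s axis k 1)" by (subst vec_expand) simp
  also have "\<dots> = (\<Sum>k\<in>UNIV. L (v $ k *s axis k 1))" by (rule sum)
  also have "\<dots> = (\<Sum>k\<in>UNIV. v $ k * L (axis k 1))" using clin_scale[OF assms] by simp
  finally show ?thesis .
qed

lemma axis_i: "axis i \<i> = \<i> *s (axis i 1 :: complex^'m)"
  by (simp add: vec_eq_iff axis_def)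

lemma hol_at:
  assumes "hol U f" "z \<in> U"
  shows "(f has_derivative (\<lambda>v. \<Sum>k\<in>UNIV. v $ k * wd f k z)) (at z)" "wdbar f i z = 0"
    "f differentiable (at z)"
proof -
  obtain L where L: "(f has_derivative L) (at z)" "\<forall>v. L (\<i> *s v) = \<i> * L v"
    using assms unfolding hol_def by blast
  have w: "wd f k z = L (axis k 1)" for k
    using L by (simp add: wd_of[OF L(1)] axis_i)
  show "(f has_derivative (\<lambda>v. \<Sum>k\<in>UNIV. v $ k * wd f k z)) (at z)"
  proof -
    have "L = (\<lambda>v. \<Sum>k\<in>UNIV. v $ k * wd f k z)"
      by (rule ext) (subst clin_expand[OF L], simp add: w)
    then show ?thesis using L(1) by simp
  qed
  show "wdbar f i z = 0"
    using L by (simp add: wdbar_of[OF L(1)] axis_i)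
  show "f differentiable (at z)" using L(1) by (rule differentiableI)
qed

lemma hol_dir:
  assumes "hol U f" "w + axis i z0 \<in> U"
  shows "((\<lambda>\<zeta>. f (w + axis i \<zeta>)) has_field_derivative wd f i (w + axis i z0)) (at z0)"
proof -
  have d: "((\<lambda>\<zeta>. w + axis i \<zeta>) has_derivative (\<lambda>h. axis i h)) (at z0)"
    by (rule has_derivative_add_const[where c=w, simplified add.commute]) (rule bounded_linear.has_derivative[OF bl_axis has_derivative_ident])
  have "((\<lambda>\<zeta>. f (w + axis i \<zeta>)) has_derivative (\<lambda>h. \<Sum>k\<in>UNIV. axis i h $ k * wd f k (w + axis i z0))) (at z0)"
    using has_derivative_compose[OF d hol_at(1)[OF assms]] by (simp add: o_def)
  moreover have "(\<lambda>h. \<Sum>k\<in>UNIV. axis i h $ k * wd f k (w + axis i z0)) = (\<lambda>h. wd f i (w + axis i z0) * h)"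
    by (simp add: fun_eq_iff axis_sum)
  ultimately show ?thesis by (simp add: has_field_derivative_def)
qed

definition cp :: "real \<Rightarrow> real \<Rightarrow> complex" where
  "cp r t = of_real r * exp (2 * of_real pi * \<i> * of_real t)"

lemma cp_circ: "circlepath 0 r = cp r"
  by (simp add: fun_eq_iff circlepath cp_def)

lemma cp_norm: "cmod (cp r t) = \<bar>r\<bar>"
  by (simp add: cp_def norm_mult)

lemma cp_nz: "r > 0 \<Longrightarrow> cp r t \<noteq> 0"
  by (simp add: cp_def)

lemma axis_0: "axis i (0::complex) = (0::complex^'m)"
  by (simp add: vec_eq_iff axis_def)

lemma hol_cauchy:
  assumes hf: "hol U f" and r: "r > 0" and sub: "\<forall>\<zeta>. cmod \<zeta> < 2*r \<longrightarrow> w + axis i \<zeta> \<in> U"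
  shows "wd f i w = integral {0..1} (\<lambda>t. f (w + axis i (cp r t)) / cp r t)"
proof -
  define g where "g = (\<lambda>\<zeta>. f (w + axis i \<zeta>))"
  have gd: "(g has_field_derivative wd f i (w + axis i \<zeta>)) (at \<zeta>)" if "cmod \<zeta> < 2*r" for \<zeta>
    unfolding g_def by (rule hol_dir[OF hf]) (use sub that in auto)
  have holg: "g holomorphic_on ball 0 (2*r)"
    unfolding holomorphic_on_def field_differentiable_def
  proof
    fix x :: complex assume "x \<in> ball 0 (2*r)"
    then have "cmod x < 2*r" by simp
    then show "\<exists>f'. (g has_field_derivative f') (at x within ball 0 (2*r))"
      by (meson gd has_field_derivative_at_within)
  qed
  have "cball 0 r \<subseteq> ball (0::complex) (2*r)" using r by auto
  then have contg: "continuous_on (cball 0 r) g"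
    using holomorphic_on_imp_continuous_on[OF holg] continuous_on_subset by blast
  have holg': "g holomorphic_on ball 0 r"
    using holg by (rule holomorphic_on_subset) (use r in auto)
  have "((\<lambda>u. g u / (u - 0) ^ Suc 1) has_contour_integral ((2 * pi * \<i>) / (fact 1) * (deriv ^^ 1) g 0)) (circlepath 0 r)"
    by (rule Cauchy_has_contour_integral_higher_derivative_circlepath[OF contg holg']) (use r in simp)
  moreover have "deriv g 0 = wd f i w"
    using DERIV_imp_deriv[OF gd[of 0]] r by (simp add: axis_0)
  ultimately have "((\<lambda>u. g u / u ^ 2) has_contour_integral (2 * pi * \<i> * wd f i w)) (cp r)"
    by (simp add: cp_circ power2_eq_square)
  then have "((\<lambda>t. g (cp r t) / (cp r t) ^ 2 * vector_derivative (circlepath 0 r) (at t within {0..1}))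
       has_integral (2 * pi * \<i> * wd f i w)) {0..1}"
    by (simp add: has_contour_integral_def cp_circ)
  moreover have "g (cp r t) / (cp r t) ^ 2 * vector_derivative (circlepath 0 r) (at t within {0..1})
      = (2 * pi * \<i>) * (g (cp r t) / cp r t)" if "t \<in> {0..1}" for t
    using that cp_nz[OF r, of t] by (simp add: vector_derivative_circlepath01 cp_def power2_eq_square field_simps)
  ultimately have "((\<lambda>t. (2 * pi * \<i>) * (g (cp r t) / cp r t)) has_integral (2 * pi * \<i> * wd f i w)) {0..1}"
    using has_integral_cong by (metis (no_types, lifting))
  then have "((\<lambda>t. g (cp r t) / cp r t) has_integral wd f i w) {0..1}"
    by (subst (asm) has_integral_mult_right_iff) auto
  then show ?thesis unfolding g_def by (rule integral_unique[symmetric])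
qed

definition Lmap :: "complex^'m \<Rightarrow> ((complex^'m) \<Rightarrow>\<^sub>L complex)" where
  "Lmap a = Blinfun (\<lambda>v. \<Sum>k\<in>UNIV. v $ k * a $ k)"

lemma Lmap_apply: "blinfun_apply (Lmap (a::complex^'m)) (v::complex^'m) = (\<Sum>k\<in>UNIV. v $ k * a $ k)"
proof -
  have "bounded_linear (\<lambda>v::complex^'m. \<Sum>k\<in>UNIV. v $ k * a $ k)"
    by (intro bounded_linear_sum bounded_linear_compose[OF bounded_linear_mult_left bounded_linear_vec_nth])
  then show ?thesis unfolding Lmap_def by (simp add: bounded_linear_Blinfun_apply)
qed

lemma bl_Lmap: "bounded_linear (Lmap :: complex^'m \<Rightarrow> _)"
proof (rule bounded_linear_intro[where K="real CARD('m)"])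
  fix a b :: "complex^'m" and r :: real
  show "Lmap (a + b) = Lmap a + Lmap b"
    by (rule blinfun_eqI) (simp add: Lmap_apply sum.distrib distrib_left plus_blinfun.rep_eq)
  show "Lmap (r *\<^sub>R a) = r *\<^sub>R Lmap a"
    by (rule blinfun_eqI) (simp add: Lmap_apply scaleR_blinfun.rep_eq, simp add: scaleR_conv_of_real sum_distrib_left algebra_simps)
  show "norm (Lmap a) \<le> norm a * real CARD('m)"
  proof (rule norm_blinfun_bound)
    show "0 \<le> norm a * real CARD('m)" by simp
    fix v :: "complex^'m"
    have "norm (\<Sum>k\<in>UNIV. v $ k * a $ k) \<le> (\<Sum>k\<in>(UNIV::'m set). norm v * norm a)"
    proof (rule sum_norm_le)
      fix k :: 'm
      show "norm (v $ k * a $ k) \<le> norm v * norm a"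
        unfolding norm_mult by (rule mult_mono) (auto intro: Finite_Cartesian_Product.norm_nth_le)
    qed
    also have "\<dots> = norm a * real CARD('m) * norm v" by simp
    finally show "norm (blinfun_apply (Lmap a) v) \<le> norm a * real CARD('m) * norm v"
      by (simp add: Lmap_apply)
  qed
qed

lemma hol_cont: "hol U f \<Longrightarrow> continuous_on U f"
  by (meson continuous_at_imp_continuous_on differentiable_imp_continuous_within hol_at(3))

lemma local_ball:
  assumes "open U" "z0 \<in> U"
  obtains r where "r > 0" "\<And>w i \<zeta>. w \<in> ball z0 r \<Longrightarrow> cmod \<zeta> < 2*r \<Longrightarrow> w + axis i \<zeta> \<in> U"
proof -
  obtain e where e: "e > 0" "ball z0 e \<subseteq> U" using assms open_contains_ball by blast
  show ?thesis
  proof (rule that[of "e/3"])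
    show "e/3 > 0" using e by simp
    fix w i \<zeta> assume w: "w \<in> ball z0 (e/3)" and z: "cmod \<zeta> < 2*(e/3)"
    have "dist z0 (w + axis i \<zeta>) \<le> dist z0 w + norm (axis i \<zeta> :: complex^_)"
      by (metis dist_norm dist_triangle2 add_diff_cancel_left' norm_minus_commute)
    also have "\<dots> < e" using w z by (simp add: norm_axis_c)
    finally show "w + axis i \<zeta> \<in> U" using e by auto
  qed
qed

lemma cp_cont: "continuous_on S (\<lambda>t. cp r t)"
  unfolding cp_def by (intro continuous_intros)

lemma param_cont:
  assumes F: "continuous_on U F" and r: "r > 0"
    and sub: "\<And>w i \<zeta>. w \<in> ball z0 r \<Longrightarrow> cmod \<zeta> < 2*r \<Longrightarrow> w + axis i \<zeta> \<in> U"
  shows "continuous_on (ball z0 r \<times> cbox 0 1) (\<lambda>x. F (fst x + axis i (cp r (snd x))) / cp r (snd x))"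
proof -
  have c1: "continuous_on (ball z0 r \<times> cbox 0 1) (\<lambda>x. fst x + axis i (cp r (snd x)))"
    by (intro continuous_intros bounded_linear.continuous_on[OF bl_axis]
        continuous_on_compose2[OF cp_cont[of UNIV r]]) (auto intro!: continuous_on_snd continuous_on_id)
  have img: "(\<lambda>x. fst x + axis i (cp r (snd x))) ` (ball z0 r \<times> cbox 0 1) \<subseteq> U"
    using sub r by (auto simp: cp_norm)
  show ?thesis
    by (intro continuous_on_divide continuous_on_compose2[OF F c1 img]
        continuous_on_compose2[OF cp_cont[of UNIV r]]) (auto simp: cp_nz[OF r] intro!: continuous_on_snd continuous_on_id)
qed

lemma hol_wd_cont:
  assumes hf: "hol U f" and U: "open U"
  shows "continuous_on U (wd f i)"
proof (rule continuous_at_imp_continuous_on, rule ballI)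
  fix z0 assume z0: "z0 \<in> U"
  obtain r where r: "r > 0" and sub: "\<And>w i \<zeta>. w \<in> ball z0 r \<Longrightarrow> cmod \<zeta> < 2*r \<Longrightarrow> w + axis i \<zeta> \<in> U"
    using local_ball[OF U z0] by blast
  have eq: "wd f i w = integral (cbox 0 1) (\<lambda>t. f (w + axis i (cp r t)) / cp r t)" if "w \<in> ball z0 r" for w
    using hol_cauchy[OF hf r] sub[OF that] by (simp add: cbox_interval)
  have "continuous_on (ball z0 r) (\<lambda>w. integral (cbox 0 1) (\<lambda>t. f (w + axis i (cp r t)) / cp r t))"
    by (rule integral_continuous_on_param)
      (use param_cont[OF hol_cont[OF hf] r sub, where i=i] in \<open>simp add: case_prod_beta'\<close>)
  then have "continuous_on (ball z0 r) (wd f i)"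
    by (rule continuous_on_eq) (simp add: eq)
  then show "isCont (wd f i) z0"
    using r by (simp add: continuous_on_eq_continuous_at)
qed

lemma hol_deriv:
  assumes hf: "hol U f" and U: "open U" and z0: "z0 \<in> U"
  obtains r D where "r > 0" "\<And>j \<zeta>. cmod \<zeta> < 2*r \<Longrightarrow> z0 + axis j \<zeta> \<in> U"
    "(wd f i has_derivative D) (at z0)" "\<And>v. D (\<i> *s v) = \<i> * D v"
    "\<And>j. D (axis j 1) = integral {0..1} (\<lambda>t. wd f j (z0 + axis i (cp r t)) / cp r t)"
proof -
  obtain r where r: "r > 0" and sub: "\<And>w i \<zeta>. w \<in> ball z0 r \<Longrightarrow> cmod \<zeta> < 2*r \<Longrightarrow> w + axis i \<zeta> \<in> U"
    using local_ball[OF U z0] by blast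
  have z0b: "z0 \<in> ball z0 r" using r by simp
  define G where "G = (\<lambda>w t. \<chi> k. wd f k (w + axis i (cp r t)) / cp r t)"
  define h where "h = (\<lambda>w t. f (w + axis i (cp r t)) / cp r t)"
  have contG: "continuous_on (ball z0 r \<times> cbox 0 1) (\<lambda>x. G (fst x) (snd x))"
    unfolding G_def by (intro continuous_on_vec_lambda) (rule param_cont[OF hol_wd_cont[OF hf U] r sub])
  have der: "((\<lambda>w. h w t) has_derivative blinfun_apply (Lmap (G w t))) (at w within ball z0 r)"
    if w: "w \<in> ball z0 r" and t: "t \<in> cbox 0 1" for w t
  proof -
    have p: "w + axis i (cp r t) \<in> U" using sub[OF w] r by (simp add: cp_norm)
    have d1: "((\<lambda>w. w + axis i (cp r t)) has_derivative (\<lambda>v. v)) (at w)"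
      by (rule has_derivative_add_const[OF has_derivative_ident])
    have d2: "((\<lambda>w. f (w + axis i (cp r t))) has_derivative
        (\<lambda>v. \<Sum>k\<in>UNIV. v $ k * wd f k (w + axis i (cp r t)))) (at w)"
      using has_derivative_compose[OF d1 hol_at(1)[OF hf p]] by (simp add: o_def)
    have d3: "((\<lambda>w. h w t) has_derivative
        (\<lambda>v. (\<Sum>k\<in>UNIV. v $ k * wd f k (w + axis i (cp r t))) * inverse (cp r t))) (at w)"
      unfolding h_def divide_inverse by (rule has_derivative_mult_left[OF d2])
    have "(\<lambda>v. (\<Sum>k\<in>UNIV. v $ k * wd f k (w + axis i (cp r t))) * inverse (cp r t)) = blinfun_apply (Lmap (G w t))"
      by (rule ext) (simp add: Lmap_apply G_def sum_distrib_right divide_inverse mult.assoc)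
    then show ?thesis using d3 by (simp add: has_derivative_at_withinI)
  qed
  have PC: "continuous_on (ball z0 r \<times> cbox 0 1) (\<lambda>x. h (fst x) (snd x))"
    unfolding h_def by (rule param_cont[OF hol_cont[OF hf] r sub])
  have integ: "h w integrable_on cbox 0 1" if w: "w \<in> ball z0 r" for w
  proof -
    have "continuous_on (cbox 0 1) (\<lambda>t. h (fst (w, t)) (snd (w, t)))"
      by (rule continuous_on_compose2[OF PC, of _ "\<lambda>t. (w, t)"]) (use w in \<open>auto intro!: continuous_intros\<close>)
    then show ?thesis by (simp add: integrable_continuous_interval)
  qed
  have intG: "G z0 integrable_on cbox 0 1"
  proof -
    have "continuous_on (cbox 0 1) (\<lambda>t. G (fst (z0, t)) (snd (z0, t)))"
      by (rule continuous_on_compose2[OF contG, of _ "\<lambda>t. (z0, t)"]) (use z0b in \<open>auto intro!: continuous_intros\<close>)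
    then show ?thesis by (simp add: integrable_continuous_interval)
  qed
  have contfx: "continuous_on (ball z0 r \<times> cbox 0 1) (\<lambda>(w, t). Lmap (G w t))"
    using bounded_linear.continuous_on[OF bl_Lmap contG] by (simp add: case_prod_beta')
  have L: "((\<lambda>w. integral (cbox 0 1) (h w)) has_derivative
      blinfun_apply (integral (cbox 0 1) (\<lambda>t. Lmap (G z0 t)))) (at z0 within ball z0 r)"
    by (rule leibniz_rule[where f=h and fx="\<lambda>w t. Lmap (G w t)", OF der integ contfx z0b convex_ball])
  have L': "((\<lambda>w. integral (cbox 0 1) (h w)) has_derivative
      blinfun_apply (integral (cbox 0 1) (\<lambda>t. Lmap (G z0 t)))) (at z0)"
    by (rule L[unfolded at_within_open[OF z0b open_ball]])
  define D where "D = blinfun_apply (integral (cbox 0 1) (\<lambda>t. Lmap (G z0 t)))"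
  have eq: "integral (cbox 0 1) (h w) = wd f i w" if "w \<in> ball z0 r" for w
    using hol_cauchy[OF hf r, of w i] sub[OF that] by (simp add: cbox_interval h_def)
  have HD: "(wd f i has_derivative D) (at z0)"
    unfolding D_def by (rule has_derivative_transform_within_open[OF L' open_ball z0b eq])
  have ID: "integral (cbox 0 1) (\<lambda>t. Lmap (G z0 t)) = Lmap (integral (cbox 0 1) (G z0))"
    using integral_linear[OF intG bl_Lmap] by (simp add: o_def)
  have Dform: "D v = (\<Sum>k\<in>UNIV. v $ k * integral (cbox 0 1) (G z0) $ k)" for v
    unfolding D_def ID by (simp add: Lmap_apply)
  show ?thesis
  proof (rule that[OF r _ HD])
    show "z0 + axis j \<zeta> \<in> U" if "cmod \<zeta> < 2*r" for j \<zeta> using sub[OF z0b that] .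
    show "D (\<i> *s v) = \<i> * D v" for v
      by (simp add: Dform sum_distrib_left mult.assoc)
    show "D (axis j 1) = integral {0..1} (\<lambda>t. wd f j (z0 + axis i (cp r t)) / cp r t)" for j
    proof -
      have "D (axis j 1) = integral (cbox 0 1) (G z0) $ j"
        unfolding Dform axis_sum by simp
      also have "\<dots> = integral (cbox 0 1) (\<lambda>t. G z0 t $ j)"
        using integral_linear[OF intG bounded_linear_vec_nth[of j]] by (simp add: o_def)
      finally show ?thesis by (simp add: G_def cbox_interval)
    qed
  qed
qed


lemma hol_wd: assumes hf: "hol U f" and U: "open U" shows "hol U (wd f i)"
  unfolding hol_def
proof
  fix z assume z: "z \<in> U"
  obtain r D where r: "r > 0" and sub: "\<And>j \<zeta>. cmod \<zeta> < 2*r \<Longrightarrow> z + axis j \<zeta> \<in> U"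
    and HD: "(wd f i has_derivative D) (at z)" and cl: "\<And>v. D (\<i> *s v) = \<i> * D v"
    and val: "\<And>j. D (axis j 1) = integral {0..1} (\<lambda>t. wd f j (z + axis i (cp r t)) / cp r t)"
    by (rule hol_deriv[OF hf U z, where i=i]) blast
  show "\<exists>f'. (wd f i has_derivative f') (at z) \<and> (\<forall>v. f' (\<i> *s v) = \<i> * f' v)"
    using HD cl by blast
qed

lemma hol_sym: assumes hf: "hol U f" and U: "open U" and z: "z \<in> U"
  shows "wd (wd f i) j z = wd (wd f j) i z"
proof -
  obtain r D where r: "r > 0" and sub: "\<And>j \<zeta>. cmod \<zeta> < 2*r \<Longrightarrow> z + axis j \<zeta> \<in> U"
    and HD: "(wd f i has_derivative D) (at z)" and cl: "\<And>v. D (\<i> *s v) = \<i> * D v"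
    and val: "\<And>j. D (axis j 1) = integral {0..1} (\<lambda>t. wd f j (z + axis i (cp r t)) / cp r t)"
    by (rule hol_deriv[OF hf U z, where i=i]) blast
  have "wd (wd f i) j z = D (axis j 1)"
    using cl[of "axis j 1"] by (simp add: wd_of[OF HD] axis_i)
  also have "\<dots> = wd (wd f j) i z"
    unfolding val by (rule hol_cauchy[OF hol_wd[OF hf U] r, symmetric]) (use sub in blast)
  finally show ?thesis .
qed

lemma d_add: "f differentiable (at z) \<Longrightarrow> g differentiable (at z) \<Longrightarrow> (\<lambda>w. f w + g w) differentiable (at z)"
  using has_derivative_add[OF dA dA] differentiableI by blast
lemma d_diff: "f differentiable (at z) \<Longrightarrow> g differentiable (at z) \<Longrightarrow> (\<lambda>w. f w - g w) differentiable (at z)"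
  using has_derivative_diff[OF dA dA] differentiableI by blast
lemma d_mult: "f differentiable (at z) \<Longrightarrow> g differentiable (at z) \<Longrightarrow> (\<lambda>w. f w * g w :: complex) differentiable (at z)"
  using has_derivative_mult[OF dA dA] differentiableI by blast
lemma d_divide: "f differentiable (at z) \<Longrightarrow> g differentiable (at z) \<Longrightarrow> g z \<noteq> 0 \<Longrightarrow> (\<lambda>w. f w / g w :: complex) differentiable (at z)"
  using has_derivative_divide'[OF dA dA] differentiableI by blast
lemma d_const: "(\<lambda>w. c) differentiable (at z)"
  using has_derivative_const differentiableI by blast
lemma d_cnj: "f differentiable (at z) \<Longrightarrow> (\<lambda>w. cnj (f w)) differentiable (at z)"
  using has_derivative_cnj[OF dA] differentiableI by blast
lemma d_sum: "(\<And>a. a \<in> S \<Longrightarrow> f a differentiable (at z)) \<Longrightarrow> (\<lambda>w. \<Sum>a\<in>S. f a w :: complex) differentiable (at z)"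
  using has_derivative_sum[of S "\<lambda>a. f a" "\<lambda>a. frechet_derivative (f a) (at z)"] dA differentiableI by blast
lemma d_Ln: "f differentiable (at z) \<Longrightarrow> f z \<notin> \<real>\<^sub>\<le>\<^sub>0 \<Longrightarrow> (\<lambda>w. Ln (f w)) differentiable (at z)"
  using has_derivative_compose[OF dA has_field_derivative_imp_has_derivative[OF has_field_derivative_Ln]]
  by (metis (no_types, lifting) comp_apply differentiableI ext)

lemma wd_minus: "f differentiable (at z) \<Longrightarrow> wd (\<lambda>w. - f w) i z = - wd f i z"
  using wd_diff(1)[OF d_const, of f z 0 i] by (simp add: wd_const)
lemma d_minus: "f differentiable (at z) \<Longrightarrow> (\<lambda>w. - f w) differentiable (at z)"
  using d_diff[OF d_const, of f z 0] by simp

lemma wd_cmult: "f differentiable (at z) \<Longrightarrow> wd (\<lambda>w. c * f w) i z = c * wd f i z"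
  "f differentiable (at z) \<Longrightarrow> wdbar (\<lambda>w. c * f w) i z = c * wdbar f i z"
  using wd_mult[OF d_const, of f z c i] by (simp_all add: wd_const)

definition vdiff :: "complex^'m \<Rightarrow> (complex^'m \<Rightarrow> complex^'k) \<Rightarrow> bool" where
  "vdiff z X \<longleftrightarrow> (\<forall>a. (\<lambda>w. X w $ a) differentiable (at z))"

definition vwdbar :: "(complex^'m \<Rightarrow> complex^'k) \<Rightarrow> 'm \<Rightarrow> complex^'m \<Rightarrow> complex^'k" where
  "vwdbar F i z = (\<chi> a. wdbar (\<lambda>w. F w $ a) i z)"

lemma pair_expand: "pair n Qm x y = (\<i> ^ n * (-1) ^ (n * (n - 1) div 2)) * (\<Sum>a\<in>UNIV. \<Sum>b\<in>UNIV. x $ a * Qm $ a $ b * y $ b)"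
  by (simp add: pair_def Qform_def)

lemma dpair:
  assumes X: "vdiff z X" and Y: "vdiff z Y"
  shows "(\<lambda>w. pair n Qm (X w) (Y w)) differentiable (at z)"
    "wd (\<lambda>w. pair n Qm (X w) (Y w)) i z = pair n Qm (vwd X i z) (Y z) + pair n Qm (X z) (vwd Y i z)"
    "wdbar (\<lambda>w. pair n Qm (X w) (Y w)) i z = pair n Qm (vwdbar X i z) (Y z) + pair n Qm (X z) (vwdbar Y i z)"
proof -
  have dX: "(\<lambda>w. X w $ a) differentiable (at z)" for a using X vdiff_def by blast
  have dY: "(\<lambda>w. Y w $ a) differentiable (at z)" for a using Y vdiff_def by blast
  have dXQ: "(\<lambda>w. X w $ a * Qm $ a $ b) differentiable (at z)" for a b
    by (rule d_mult[OF dX d_const])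
  have dt: "(\<lambda>w. X w $ a * Qm $ a $ b * Y w $ b) differentiable (at z)" for a b
    by (rule d_mult[OF dXQ dY])
  have ds: "(\<lambda>w. \<Sum>b\<in>UNIV. X w $ a * Qm $ a $ b * Y w $ b) differentiable (at z)" for a
    by (rule d_sum) (rule dt)
  have dss: "(\<lambda>w. \<Sum>a\<in>UNIV. \<Sum>b\<in>UNIV. X w $ a * Qm $ a $ b * Y w $ b) differentiable (at z)"
    by (rule d_sum) (rule ds)
  show "(\<lambda>w. pair n Qm (X w) (Y w)) differentiable (at z)"
    unfolding pair_expand by (rule d_mult[OF d_const dss])
  have wt: "wd (\<lambda>w. X w $ a * Qm $ a $ b * Y w $ b) i z = X z $ a * Qm $ a $ b * wd (\<lambda>w. Y w $ b) i z + wd (\<lambda>w. X w $ a) i z * Qm $ a $ b * Y z $ b" for a b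
    by (simp add: wd_mult[OF dXQ dY] wd_mult[OF dX d_const] wd_const)
  have wtb: "wdbar (\<lambda>w. X w $ a * Qm $ a $ b * Y w $ b) i z = X z $ a * Qm $ a $ b * wdbar (\<lambda>w. Y w $ b) i z + wdbar (\<lambda>w. X w $ a) i z * Qm $ a $ b * Y z $ b" for a b
    by (simp add: wd_mult[OF dXQ dY] wd_mult[OF dX d_const] wd_const)
  show "wd (\<lambda>w. pair n Qm (X w) (Y w)) i z = pair n Qm (vwd X i z) (Y z) + pair n Qm (X z) (vwd Y i z)"
    unfolding pair_expand
    by (simp add: wd_cmult[OF dss] wd_sum(1)[OF _ ds] wd_sum(1)[OF _ dt] wt vwd_def
        sum.distrib distrib_left)
  show "wdbar (\<lambda>w. pair n Qm (X w) (Y w)) i z = pair n Qm (vwdbar X i z) (Y z) + pair n Qm (X z) (vwdbar Y i z)"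
    unfolding pair_expand
    by (simp add: wd_cmult[OF dss] wd_sum(2)[OF _ ds] wd_sum(2)[OF _ dt] wtb vwdbar_def
        sum.distrib distrib_left)
qed

lemma pair_add1: "pair n Qm (x + y) u = pair n Qm x u + pair n Qm y u"
  by (simp add: pair_expand sum.distrib distrib_left distrib_right)
lemma pair_add2: "pair n Qm u (x + y) = pair n Qm u x + pair n Qm u y"
  by (simp add: pair_expand sum.distrib distrib_left distrib_right)
lemma pair_diff1: "pair n Qm (x - y) u = pair n Qm x u - pair n Qm y u"
  by (simp add: pair_expand sum_subtractf left_diff_distrib right_diff_distrib)
lemma pair_diff2: "pair n Qm u (x - y) = pair n Qm u x - pair n Qm u y"
  by (simp add: pair_expand sum_subtractf left_diff_distrib right_diff_distrib)
lemma pair_scale1: "pair n Qm (c *s x) u = c * pair n Qm x u"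
  by (simp add: pair_expand sum_distrib_left mult.assoc mult.left_commute)
lemma pair_scale2: "pair n Qm u (c *s x) = c * pair n Qm u x"
  by (simp add: pair_expand sum_distrib_left mult.assoc mult.left_commute)
lemma pair_zero2: "pair n Qm u 0 = 0"
  by (simp add: pair_expand)
lemma pair_zero1: "pair n Qm 0 u = 0"
  by (simp add: pair_expand)
lemma pair_sum1: "finite S \<Longrightarrow> pair n Qm (\<Sum>k\<in>S. X k) u = (\<Sum>k\<in>S. pair n Qm (X k) u)"
  by (induction S rule: finite_induct) (simp_all add: pair_zero1 pair_add1)

lemma vcnj_add: "vcnj (x + y) = vcnj x + vcnj y" by (simp add: vcnj_def vec_eq_iff)
lemma vcnj_scale: "vcnj (c *s x) = cnj c *s vcnj x" by (simp add: vcnj_def vec_eq_iff)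
lemma vcnj_vcnj: "vcnj (vcnj x) = x" by (simp add: vcnj_def vec_eq_iff)
lemma vcnj_zero: "vcnj 0 = 0" by (simp add: vcnj_def vec_eq_iff)

lemma cnj_pair:
  assumes Qreal: "\<forall>a b. Qm $ a $ b \<in> \<real>" and Qsym: "\<forall>a b. Qm $ b $ a = (-1) ^ n * Qm $ a $ b"
  shows "cnj (pair n Qm x y) = pair n Qm (vcnj y) (vcnj x)"
proof -
  have cq: "cnj (Qm $ a $ b) = Qm $ a $ b" for a b using Qreal by (simp add: Reals_cnj_iff)
  have ci: "(- \<i>) ^ n = (-1) ^ n * \<i> ^ n"
    by (metis mult_minus1 power_mult_distrib)
  have "cnj (pair n Qm x y) = (-1) ^ n * \<i> ^ n * (-1) ^ (n * (n - 1) div 2) *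
        (\<Sum>a\<in>UNIV. \<Sum>b\<in>UNIV. cnj (x $ a) * Qm $ a $ b * cnj (y $ b))"
    by (simp add: pair_expand ci cq mult.assoc)
  also have "(\<Sum>a\<in>UNIV. \<Sum>b\<in>UNIV. cnj (x $ a) * Qm $ a $ b * cnj (y $ b))
      = (\<Sum>b\<in>UNIV. \<Sum>a\<in>UNIV. cnj (y $ b) * ((-1) ^ n * Qm $ b $ a) * cnj (x $ a))"
  proof -
    have qs: "(-1) ^ n * Qm $ b $ a = Qm $ a $ b" for a b
    proof -
      have "(-1) ^ n * Qm $ b $ a = ((-1) ^ n * (-1) ^ n) * Qm $ a $ b"
        unfolding Qsym[rule_format, of b a] by (simp only: mult.assoc)
      also have "(-1::complex) ^ n * (-1) ^ n = 1" by (simp add: power_mult_distrib[symmetric])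
      finally show ?thesis by simp
    qed
    show ?thesis
      by (simp only: qs) (subst sum.swap, simp add: ac_simps)
  qed
  finally show ?thesis
    by (simp add: pair_expand vcnj_def sum_distrib_left mult.assoc mult.left_commute)
qed

lemma holv: "holo_on U F \<Longrightarrow> hol U (\<lambda>w. F w $ a)"
  by (simp add: holo_on_def hol_def)

lemma vwd_nth: "(\<lambda>w. vwd F i w $ a) = wd (\<lambda>w. F w $ a) i"
  by (simp add: vwd_def fun_eq_iff)

lemma holv_vwd: "holo_on U F \<Longrightarrow> open U \<Longrightarrow> holo_on U (vwd F i)"
  unfolding holo_on_def
proof (intro allI ballI)
  fix a z assume h: "\<forall>a. \<forall>z\<in>U. \<exists>f'. ((\<lambda>w. F w $ a) has_derivative f') (at z) \<and> (\<forall>v. f' (\<i> *s v) = \<i> * f' v)"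
    and U: "open U" and z: "z \<in> U"
  have "hol U (\<lambda>w. F w $ a)" using h by (simp add: hol_def)
  then have "hol U (wd (\<lambda>w. F w $ a) i)" using U by (rule hol_wd)
  then show "\<exists>f'. ((\<lambda>w. vwd F i w $ a) has_derivative f') (at z) \<and> (\<forall>v. f' (\<i> *s v) = \<i> * f' v)"
    using z unfolding vwd_nth hol_def by blast
qed

lemma holv_at: assumes "holo_on U F" "z \<in> U" shows "vdiff z F \<and> vwdbar F i z = 0"
  using hol_at(2,3)[OF holv[OF assms(1)] assms(2)] by (simp add: vdiff_def vwdbar_def vec_eq_iff)

lemma vwd_vcnj: "vdiff z X \<Longrightarrow> vwd (\<lambda>w. vcnj (X w)) i z = vcnj (vwdbar X i z)
   \<and> vwdbar (\<lambda>w. vcnj (X w)) i z = vcnj (vwd X i z) \<and> vdiff z (\<lambda>w. vcnj (X w))"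
  by (simp add: vdiff_def vwd_def vwdbar_def vcnj_def vec_eq_iff wd_cnj d_cnj)

lemma vwd_lin:
  assumes X: "vdiff z X" and Y: "vdiff z Y" and c: "c differentiable (at z)"
  shows "vwd (\<lambda>w. X w + c w *s Y w) i z = vwd X i z + wd c i z *s Y z + c z *s vwd Y i z"
    "vdiff z (\<lambda>w. X w + c w *s Y w)"
proof -
  have dX: "(\<lambda>w. X w $ a) differentiable (at z)" for a using X vdiff_def by blast
  have dY: "(\<lambda>w. Y w $ a) differentiable (at z)" for a using Y vdiff_def by blast
  show "vwd (\<lambda>w. X w + c w *s Y w) i z = vwd X i z + wd c i z *s Y z + c z *s vwd Y i z"
    by (simp add: vwd_def vec_eq_iff wd_add(1)[OF dX d_mult[OF c dY]] wd_mult(1)[OF c dY])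
  show "vdiff z (\<lambda>w. X w + c w *s Y w)"
    by (simp add: vdiff_def d_add[OF dX d_mult[OF c dY]])
qed

lemma vsym: "holo_on U F \<Longrightarrow> open U \<Longrightarrow> z \<in> U \<Longrightarrow> vwd (vwd F i) j z = vwd (vwd F j) i z"
  unfolding vec_eq_iff
proof
  fix a assume "holo_on U F" "open U" "z \<in> U"
  then show "vwd (vwd F i) j z $ a = vwd (vwd F j) i z $ a"
    unfolding vwd_def[of "vwd F i"] vwd_def[of "vwd F j"] by (simp add: vwd_nth hol_sym[OF holv])
qed

lemma inv_sum:
  fixes W :: "complex^'m^'m"
  assumes "invertible (transpose W)"
  shows "(\<Sum>k\<in>UNIV. (\<Sum>q\<in>UNIV. matrix_inv (transpose W) $ k $ q * d q) * W $ k $ l) = d l"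
proof -
  have M: "transpose W ** matrix_inv (transpose W) = mat 1"
    using someI_ex[OF assms[unfolded invertible_def]] unfolding matrix_inv_def by blast
  have e: "(\<Sum>k\<in>UNIV. W $ k $ l * matrix_inv (transpose W) $ k $ q) = (if l = q then 1 else 0)" for q
  proof -
    have "(transpose W ** matrix_inv (transpose W)) $ l $ q = (mat 1 :: complex^'m^'m) $ l $ q" by (simp add: M)
    then show ?thesis by (simp add: matrix_matrix_mult_def transpose_def mat_def)
  qed
  have "(\<Sum>k\<in>UNIV. (\<Sum>q\<in>UNIV. matrix_inv (transpose W) $ k $ q * d q) * W $ k $ l)
      = (\<Sum>q\<in>UNIV. d q * (\<Sum>k\<in>UNIV. W $ k $ l * matrix_inv (transpose W) $ k $ q))"
    by (simp add: sum_distrib_left sum_distrib_right mult_ac) (rule sum.swap)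
  also have "\<dots> = (\<Sum>q\<in>UNIV. if q = l then d q else 0)" by (rule sum.cong) (auto simp: e)
  also have "\<dots> = d l" by simp
  finally show ?thesis .
qed

lemma posdef_inv:
  fixes W :: "complex^'m^'m"
  assumes pd: "\<forall>v. v \<noteq> 0 \<longrightarrow> Re (\<Sum>i\<in>UNIV. \<Sum>j\<in>UNIV. W $ i $ j * v $ i * cnj (v $ j)) > 0"
  shows "invertible (transpose W)"
proof -
  have "\<forall>x. transpose W *v x = 0 \<longrightarrow> x = 0"
  proof (intro allI impI)
    fix x assume x: "transpose W *v x = 0"
    show "x = 0"
    proof (rule ccontr)
      assume "x \<noteq> 0"
      then have pos: "Re (\<Sum>i\<in>UNIV. \<Sum>j\<in>UNIV. W $ i $ j * x $ i * cnj (x $ j)) > 0" using pd by blast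
      have c: "(\<Sum>i\<in>UNIV. W $ i $ j * x $ i) = 0" for j
        using arg_cong[OF x, of "\<lambda>v. v $ j"] by (simp add: matrix_vector_mult_def transpose_def)
      have "(\<Sum>i\<in>UNIV. \<Sum>j\<in>UNIV. W $ i $ j * x $ i * cnj (x $ j)) = (\<Sum>j\<in>UNIV. (\<Sum>i\<in>UNIV. W $ i $ j * x $ i) * cnj (x $ j))"
        by (subst sum.swap) (simp add: sum_distrib_right)
      also have "\<dots> = 0" by (simp add: c)
      finally show False using pos by simp
    qed
  qed
  then show ?thesis
    using matrix_left_invertible_ker invertible_left_inverse by blast
qed

theorem lemma3p3:
  fixes n :: nat
    and Qm :: "complex^'k^'k"
    and U :: "(complex^'m) set"
    and \<Omega> :: "complex^'m \<Rightarrow> complex^'k"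
  assumes n3: "n \<ge> 3"
    and Qreal: "\<forall>a b. Qm $ a $ b \<in> \<real>"
    and Qsym: "\<forall>a b. Qm $ b $ a = (-1) ^ n * Qm $ a $ b"
    and Qnondeg: "det Qm \<noteq> 0"
    and U_open: "open U"
    and holo: "holo_on U \<Omega>"
    and Omega_nz: "\<forall>z\<in>U. \<Omega> z \<noteq> 0"
    and HR_pos: "\<forall>z\<in>U. normsq n Qm \<Omega> z \<in> \<real> \<and> Re (normsq n Qm \<Omega> z) > 0"
    and wp_herm: "\<forall>z\<in>U. \<forall>i j. wp n Qm \<Omega> z $ j $ i = cnj (wp n Qm \<Omega> z $ i $ j)"
    and wp_posdef: "\<forall>z\<in>U. \<forall>v. v \<noteq> 0 \<longrightarrow>
        Re (\<Sum>i\<in>UNIV. \<Sum>j\<in>UNIV. wp n Qm \<Omega> z $ i $ j * v $ i * cnj (v $ j)) > 0"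
  shows "\<forall>z\<in>U. \<forall>i j l.
           pair n Qm (D2 n Qm \<Omega> j i z) (vcnj (\<Omega> z)) = 0
         \<and> pair n Qm (D2 n Qm \<Omega> j i z) (vcnj (D1 n Qm \<Omega> l z)) = 0
         \<and> D2 n Qm \<Omega> j i z = D2 n Qm \<Omega> i j z"
proof (intro ballI allI)
  fix z i j l assume z: "z \<in> U"
  define N where "N = normsq n Qm \<Omega>"
  define A where "A = (\<lambda>k w. pair n Qm (vwd \<Omega> k w) (vcnj (\<Omega> w)))"
  define B where "B = (\<lambda>k w. pair n Qm (\<Omega> w) (vcnj (vwd \<Omega> k w)))"
  define C where "C = (\<lambda>k q w. pair n Qm (vwd \<Omega> k w) (vcnj (vwd \<Omega> q w)))"
  define G where "G = (\<lambda>k q w. (B q w * A k w - C k q w * N w) / (N w * N w))"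
  have h1: "holo_on U (vwd \<Omega> k)" for k by (rule holv_vwd[OF holo U_open])
  have vd0: "vdiff w \<Omega>" "vwdbar \<Omega> k w = 0" if "w \<in> U" for w k
    using holv_at[OF holo that] by auto
  have vd1: "vdiff w (vwd \<Omega> q)" "vwdbar (vwd \<Omega> q) k w = 0" if "w \<in> U" for w k q
    using holv_at[OF h1 that] by auto
  have cj0: "vdiff w (\<lambda>w. vcnj (\<Omega> w))" "vwd (\<lambda>w. vcnj (\<Omega> w)) k w = 0"
      "vwdbar (\<lambda>w. vcnj (\<Omega> w)) k w = vcnj (vwd \<Omega> k w)" if "w \<in> U" for w k
    using vwd_vcnj[OF vd0(1)[OF that], of k] vd0(2)[OF that, of k] by (auto simp: vcnj_zero)
  have cj1: "vdiff w (\<lambda>w. vcnj (vwd \<Omega> q w))" "vwd (\<lambda>w. vcnj (vwd \<Omega> q w)) k w = 0"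
      if "w \<in> U" for w k q
    using vwd_vcnj[OF vd1(1)[OF that, of q], of k] vd1(2)[OF that, where k=k and q=q] by (auto simp: vcnj_zero)
  have Ndef: "N w = pair n Qm (\<Omega> w) (vcnj (\<Omega> w))" for w by (simp add: N_def normsq_def)
  have dN: "N differentiable (at w)" "wd N k w = A k w" "wdbar N k w = B k w" if "w \<in> U" for w k
  proof -
    have e: "N = (\<lambda>w. pair n Qm (\<Omega> w) (vcnj (\<Omega> w)))" by (simp add: fun_eq_iff Ndef)
    note dp = dpair[OF vd0(1)[OF that] cj0(1)[OF that], where n=n and Qm=Qm]
    show "N differentiable (at w)" unfolding e by (rule dp(1))
    show "wd N k w = A k w" unfolding e dp(2) by (simp add: cj0[OF that] vd0[OF that] pair_zero2 A_def)
    show "wdbar N k w = B k w" unfolding e dp(3) by (simp add: cj0[OF that] vd0[OF that] pair_zero1 B_def)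
  qed
  have Npos: "N w \<notin> \<real>\<^sub>\<le>\<^sub>0" "N w \<noteq> 0" "cnj (N w) = N w" if "w \<in> U" for w
  proof -
    have r: "N w \<in> \<real>" "Re (N w) > 0" using HR_pos that by (auto simp: N_def)
    then show "N w \<notin> \<real>\<^sub>\<le>\<^sub>0" by (auto simp: nonpos_Reals_def)
    show "N w \<noteq> 0" using r by auto
    show "cnj (N w) = N w" using r by (simp add: Reals_cnj_iff)
  qed
  have dA: "A k differentiable (at w)" "wd (A k) q w = pair n Qm (vwd (vwd \<Omega> k) q w) (vcnj (\<Omega> w))"
    if "w \<in> U" for w k q
  proof -
    note dp = dpair[OF vd1(1)[OF that, of k] cj0(1)[OF that], where n=n and Qm=Qm]
    show "A k differentiable (at w)" unfolding A_def by (rule dp(1))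
    show "wd (A k) q w = pair n Qm (vwd (vwd \<Omega> k) q w) (vcnj (\<Omega> w))"
      unfolding A_def dp(2) by (simp add: cj0[OF that] pair_zero2)
  qed
  have dB: "B q differentiable (at w)" "wd (B q) k w = C k q w" if "w \<in> U" for w k q
  proof -
    note dp = dpair[OF vd0(1)[OF that] cj1(1)[OF that, of q], where n=n and Qm=Qm]
    show "B q differentiable (at w)" unfolding B_def by (rule dp(1))
    show "wd (B q) k w = C k q w"
      unfolding B_def dp(2) by (simp add: cj1[OF that] pair_zero2 C_def)
  qed
  have dC: "C k q differentiable (at w)" "wd (C k q) j w = pair n Qm (vwd (vwd \<Omega> k) j w) (vcnj (vwd \<Omega> q w))"
    if "w \<in> U" for w k q j
  proof -
    note dp = dpair[OF vd1(1)[OF that, of k] cj1(1)[OF that, of q], where n=n and Qm=Qm]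
    show "C k q differentiable (at w)" unfolding C_def by (rule dp(1))
    show "wd (C k q) j w = pair n Qm (vwd (vwd \<Omega> k) j w) (vcnj (vwd \<Omega> q w))"
      unfolding C_def dp(2) by (simp add: cj1[OF that] pair_zero2)
  qed
  have Kform: "Kc n Qm \<Omega> k w = - (A k w / N w)" if "w \<in> U" for w k
    unfolding Kc_def N_def[symmetric] using wd_Ln(1)[OF dN(1)[OF that] Npos(1)[OF that]] dN(2)[OF that] by simp
  have Lbar: "wdbar (\<lambda>u. Ln (N u)) q w = B q w / N w" if "w \<in> U" for w q
    using wd_Ln(2)[OF dN(1)[OF that] Npos(1)[OF that]] dN(3)[OF that] by simp
  have dG: "G k q differentiable (at w)" if "w \<in> U" for w k q
    unfolding G_def
    by (intro d_divide d_diff d_mult dA(1) dB(1) dC(1) dN(1) that) (simp add: Npos(2)[OF that])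
  have wpG: "wp n Qm \<Omega> w $ k $ q = G k q w" if "w \<in> U" for w k q
  proof -
    have dq: "(\<lambda>w. B q w / N w) differentiable (at w)"
      by (rule d_divide[OF dB(1)[OF that] dN(1)[OF that] Npos(2)[OF that]])
    have "wd (\<lambda>w. wdbar (\<lambda>u. Ln (N u)) q w) k w = wd (\<lambda>w. B q w / N w) k w"
      using wd_local[OF dq U_open that, of "\<lambda>w. wdbar (\<lambda>u. Ln (N u)) q w"] Lbar by blast
    also have "\<dots> = (C k q w * N w - B q w * A k w) / (N w * N w)"
      by (simp add: wd_divide(1)[OF dB(1)[OF that] dN(1)[OF that] Npos(2)[OF that]] dB(2)[OF that] dN(2)[OF that])
    finally show ?thesis
      unfolding wp_def N_def[symmetric] G_def using Npos(2)[OF that] by (simp add: field_simps)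
  qed
  note Nz = Npos[OF z]
  define Fs where "Fs = (\<lambda>a b. pair n Qm (vwd (vwd \<Omega> a) b z) (vcnj (\<Omega> z)))"
  define Es where "Es = (\<lambda>a b c. pair n Qm (vwd (vwd \<Omega> a) b z) (vcnj (vwd \<Omega> c z)))"
  have O2sym: "vwd (vwd \<Omega> a) b z = vwd (vwd \<Omega> b) a z" for a b by (rule vsym[OF holo U_open z])
  have Fsym: "Fs a b = Fs b a" for a b unfolding Fs_def using O2sym by metis
  have Esym: "Es a b c = Es b a c" for a b c unfolding Es_def using O2sym by metis
  have dGz: "wd (G a q) b z = - (Es a b q / N z) + (C a q z * A b z + C b q z * A a z + B q z * Fs a b) / (N z)^2
       - 2 * A a z * A b z * B q z / (N z)^3" for a b q
  proof -
    have d1: "(\<lambda>w. B q w * A a w) differentiable (at z)" by (rule d_mult[OF dB(1)[OF z] dA(1)[OF z]])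
    have d2: "(\<lambda>w. C a q w * N w) differentiable (at z)" by (rule d_mult[OF dC(1)[OF z] dN(1)[OF z]])
    have d3: "(\<lambda>w. N w * N w) differentiable (at z)" by (rule d_mult[OF dN(1)[OF z] dN(1)[OF z]])
    have d4: "(\<lambda>w. B q w * A a w - C a q w * N w) differentiable (at z)" by (rule d_diff[OF d1 d2])
    have nz: "N z * N z \<noteq> 0" using Nz by simp
    have "wd (G a q) b z = (wd (\<lambda>w. B q w * A a w - C a q w * N w) b z * (N z * N z)
        - (B q z * A a z - C a q z * N z) * wd (\<lambda>w. N w * N w) b z) / ((N z * N z) * (N z * N z))"
      unfolding G_def by (rule wd_divide(1)[OF d4 d3 nz])
    also have "wd (\<lambda>w. B q w * A a w - C a q w * N w) b z = (B q z * Fs a b + C b q z * A a z) - (C a q z * A b z + Es a b q * N z)"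
      by (simp add: wd_diff(1)[OF d1 d2] wd_mult(1)[OF dB(1)[OF z] dA(1)[OF z]] wd_mult(1)[OF dC(1)[OF z] dN(1)[OF z]]
          dA(2)[OF z] dB(2)[OF z] dC(2)[OF z] dN(2)[OF z] Fs_def Es_def)
    also have "wd (\<lambda>w. N w * N w) b z = N z * A b z + A b z * N z"
      by (simp add: wd_mult(1)[OF dN(1)[OF z] dN(1)[OF z]] dN(2)[OF z])
    finally have e: "wd (G a q) b z = ((B q z * Fs a b + C b q z * A a z - (C a q z * A b z + Es a b q * N z)) * (N z * N z) -
        (B q z * A a z - C a q z * N z) * (N z * A b z + A b z * N z)) / (N z * N z * (N z * N z))" .
    show ?thesis unfolding e using Nz(2) by (simp add: field_simps power2_eq_square power3_eq_cube)
  qed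
  have Chr_eq: "Chr n Qm \<Omega> k a b z = (\<Sum>q\<in>UNIV. wpinv n Qm \<Omega> z $ k $ q * wd (G a q) b z)" for k a b
    unfolding Chr_def
  proof (rule sum.cong[OF refl])
    fix q
    have "wd (\<lambda>w. wp n Qm \<Omega> w $ a $ q) b z = wd (G a q) b z"
      using wd_local[OF dG[OF z] U_open z, of "\<lambda>w. wp n Qm \<Omega> w $ a $ q"] wpG by blast
    then show "wpinv n Qm \<Omega> z $ k $ q * wd (\<lambda>w. wp n Qm \<Omega> w $ a $ q) b z = wpinv n Qm \<Omega> z $ k $ q * wd (G a q) b z"
      by simp
  qed
  have dGsym: "wd (G a q) b z = wd (G b q) a z" for a b q
    unfolding dGz Fsym[of a b] Esym[of a b] by (simp add: algebra_simps)
  have ChrSym: "Chr n Qm \<Omega> k a b z = Chr n Qm \<Omega> k b a z" for k a b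
    unfolding Chr_eq dGsym[of a _ b] ..
  have dK: "Kc n Qm \<Omega> a differentiable (at z)" "wd (Kc n Qm \<Omega> a) b z = - ((Fs a b * N z - A a z * A b z) / (N z * N z))" for a b
  proof -
    have d0: "(\<lambda>w. A a w / N w) differentiable (at z)" by (rule d_divide[OF dA(1)[OF z] dN(1)[OF z] Nz(2)])
    have d1: "(\<lambda>w. - (A a w / N w)) differentiable (at z)" by (rule d_minus[OF d0])
    note L = wd_local[OF d1 U_open z, of "Kc n Qm \<Omega> a" b] 
    have L': "wd (Kc n Qm \<Omega> a) b z = wd (\<lambda>w. - (A a w / N w)) b z \<and> Kc n Qm \<Omega> a differentiable (at z)"
      using L Kform by blast
    then show "Kc n Qm \<Omega> a differentiable (at z)" by blast
    show "wd (Kc n Qm \<Omega> a) b z = - ((Fs a b * N z - A a z * A b z) / (N z * N z))"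
      using L' by (simp add: wd_minus[OF d0] wd_divide(1)[OF dA(1)[OF z] dN(1)[OF z] Nz(2)] dA(2)[OF z] dN(2)[OF z] Fs_def)
  qed
  have D1fun: "D1 n Qm \<Omega> a = (\<lambda>w. vwd \<Omega> a w + Kc n Qm \<Omega> a w *s \<Omega> w)" for a by (simp add: fun_eq_iff D1_def)
  have vD1: "vwd (D1 n Qm \<Omega> a) b z = vwd (vwd \<Omega> a) b z + wd (Kc n Qm \<Omega> a) b z *s \<Omega> z + Kc n Qm \<Omega> a z *s vwd \<Omega> b z" for a b
    unfolding D1fun by (rule vwd_lin(1)[OF vd1(1)[OF z] vd0(1)[OF z] dK(1)])
  have D1z: "D1 n Qm \<Omega> a z = vwd \<Omega> a z + Kc n Qm \<Omega> a z *s \<Omega> z" for a by (simp add: D1_def)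
  have Kz: "Kc n Qm \<Omega> a z = - (A a z / N z)" for a by (rule Kform[OF z])
  define S where "S = (\<lambda>a b. \<Sum>k\<in>UNIV. Chr n Qm \<Omega> k a b z *s D1 n Qm \<Omega> k z)"
  have Ssym: "S a b = S b a" for a b unfolding S_def ChrSym[of _ a b] ..
  have D2form: "D2 n Qm \<Omega> b a z = vwd (vwd \<Omega> a) b z
      + (wd (Kc n Qm \<Omega> a) b z + Kc n Qm \<Omega> b z * Kc n Qm \<Omega> a z) *s \<Omega> z
      + Kc n Qm \<Omega> a z *s vwd \<Omega> b z + Kc n Qm \<Omega> b z *s vwd \<Omega> a z - S a b" for a b
    unfolding D2_def vD1 D1z S_def by (simp add: vec_eq_iff algebra_simps)
  have wdKsym: "wd (Kc n Qm \<Omega> a) b z = wd (Kc n Qm \<Omega> b) a z" for a b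
    unfolding dK(2) Fsym[of a b] by (simp add: algebra_simps)
  have sym3: "D2 n Qm \<Omega> j i z = D2 n Qm \<Omega> i j z"
    unfolding D2form O2sym[of i j] wdKsym[of i j] Ssym[of i j] by (simp add: algebra_simps)
  have AO: "pair n Qm (vwd \<Omega> a z) (vcnj (\<Omega> z)) = A a z" for a by (simp add: A_def)
  have pD1O: "pair n Qm (D1 n Qm \<Omega> a z) (vcnj (\<Omega> z)) = 0" for a
    unfolding D1z pair_add1 pair_scale1 AO Ndef[symmetric] Kz using Nz(2) by simp
  have one: "pair n Qm (D2 n Qm \<Omega> j i z) (vcnj (\<Omega> z)) = 0"
  proof -
    have "pair n Qm (D2 n Qm \<Omega> j i z) (vcnj (\<Omega> z)) =
        Fs i j + wd (Kc n Qm \<Omega> i) j z * N z + Kc n Qm \<Omega> i z * A j z"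
      unfolding D2_def pair_add1 pair_diff1 pair_sum1[OF finite_class.finite_UNIV] pair_scale1 pD1O vD1 AO Ndef[symmetric]
      by (simp add: Fs_def)
    also have "\<dots> = 0" unfolding dK(2) Kz using Nz(2) by (simp add: field_simps)
    finally show ?thesis .
  qed
  define X where "X = vcnj (D1 n Qm \<Omega> l z)"
  have cA: "cnj (A l z) = B l z"
    unfolding A_def B_def cnj_pair[OF Qreal Qsym] vcnj_vcnj ..
  have Xeq: "X = vcnj (vwd \<Omega> l z) + (- (B l z / N z)) *s vcnj (\<Omega> z)"
    unfolding X_def D1z vcnj_add vcnj_scale Kz using cA Nz(3) by simp
  have pOX: "pair n Qm (\<Omega> z) X = 0"
    unfolding Xeq pair_add2 pair_scale2 Ndef[symmetric] using Nz(2) by (simp add: B_def)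
  have pO1X: "pair n Qm (vwd \<Omega> a z) X = C a l z - B l z / N z * A a z" for a
    unfolding Xeq pair_add2 pair_scale2 AO by (simp add: C_def)
  have pO2X: "pair n Qm (vwd (vwd \<Omega> i) j z) X = Es i j l - B l z / N z * Fs i j"
    unfolding Xeq pair_add2 pair_scale2 by (simp add: Es_def Fs_def)
  have pD1X: "pair n Qm (D1 n Qm \<Omega> a z) X = - N z * G a l z" for a
    unfolding D1z pair_add1 pair_scale1 pOX pO1X Kz G_def using Nz(2) by (simp add: field_simps)
  have inv: "invertible (transpose (wp n Qm \<Omega> z))" using posdef_inv wp_posdef z by blast
  have SX: "pair n Qm (S i j) X = - N z * wd (G i l) j z"
  proof -
    have "pair n Qm (S i j) X = - N z * (\<Sum>k\<in>UNIV. Chr n Qm \<Omega> k i j z * wp n Qm \<Omega> z $ k $ l)"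
      unfolding S_def pair_sum1[OF finite_class.finite_UNIV] pair_scale1 pD1X wpG[OF z]
      by (simp add: sum_distrib_left mult_ac)
    also have "(\<Sum>k\<in>UNIV. Chr n Qm \<Omega> k i j z * wp n Qm \<Omega> z $ k $ l) = wd (G i l) j z"
      unfolding Chr_eq wpinv_def by (rule inv_sum[OF inv])
    finally show ?thesis .
  qed
  have two: "pair n Qm (D2 n Qm \<Omega> j i z) X = 0"
  proof -
    have "pair n Qm (D2 n Qm \<Omega> j i z) X = (Es i j l - B l z / N z * Fs i j)
        + Kc n Qm \<Omega> i z * (C j l z - B l z / N z * A j z) + N z * wd (G i l) j z
        + Kc n Qm \<Omega> j z * (C i l z - B l z / N z * A i z)"
    proof -
      have Sij: "(\<Sum>k\<in>UNIV. Chr n Qm \<Omega> k i j z *s D1 n Qm \<Omega> k z) = S i j" by (simp add: S_def)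
      show ?thesis
        unfolding D2_def Sij unfolding pair_add1 pair_diff1 pair_scale1 SX vD1 pO2X pO1X pOX D1z
        by simp
    qed
    also have "\<dots> = 0" unfolding dGz Kz using Nz(2) by (simp add: field_simps power2_eq_square power3_eq_cube)
    finally show ?thesis .
  qed
  show "pair n Qm (D2 n Qm \<Omega> j i z) (vcnj (\<Omega> z)) = 0
         \<and> pair n Qm (D2 n Qm \<Omega> j i z) (vcnj (D1 n Qm \<Omega> l z)) = 0
         \<and> D2 n Qm \<Omega> j i z = D2 n Qm \<Omega> i j z"
    using one two sym3 by (simp add: X_def)
qed

end
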